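(* For every directed co-graph $G=(V,E)$ which is given by a binary di-co-tree, the directed path-width $\mathrm{dpw}(G)$ and the directed tree-width $\mathrm{dtw}(G)$ can be computed in time $O(|V|)$.
   Context: Digraphs are finite, without loops or multiple arcs. Operations on vertex-disjoint digraphs $G_1,\ldots,G_k$: disjoint union $\oplus$ (union of vertex and arc sets); series composition $\otimes$ (disjoint union plus all arcs in both directions between vertices of different $G_i$); order composition $\oslash$ (disjoint union plus all arcs from vertices of $G_i$ to vertices of $G_j$ for $i<j$). Directed co-graphs: single-vertex digraphs, and closure under these three operations. A di-co-tree for a directed co-graph $G$ is a rooted tree whose leaves correspond to the vertices of $G$ and whose inner nodes are labeled by $\oplus,\otimes,\oslash$ (with ordered children), such that evaluating the operations on the digraphs defined by the child subtrees yields $G$ at the root; it is binary if every inner node has exactly two children. Directed path-width: a directed path-decomposition of $G=(V,E)$ is a sequence $(X_1,\ldots,X_r)$ of subsets of $V$ with $\bigcup X_i=V$, for each arc $(u,v)$ some $i\le j$ with $u\in X_i,v\in X_j$, and for each vertex the bags containing it having consecutive indices; width $\max|X_i|-1$; $\mathrm{dpw}(G)$ is the minimum width. Directed tree-width: for $Z\subseteq V$, $S\subseteq V$ is $Z$-normal if no directed walk in $G-Z$ with first and last vertex in $S$ uses a vertex of $G-(Z\cup S)$. A directed tree-decomposition is $(T,\mathcal{X},\mathcal{W})$ with $T=(V_T,E_T)$ an out-tree (rooted, arcs directed away from root; $u\le v$ means a directed path of $\ge0$ arcs from $u$ to $v$), $\mathcal{X}=\{X_e:e\in E_T\}$, $\mathcal{W}=\{W_r:r\in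 V_T\}$ subsets of $V$, such that $\mathcal{W}$ partitions $V$ into nonempty sets and for each $(u,v)\in E_T$ the set $\bigcup\{W_r: v\le r\}$ is $X_{(u,v)}$-normal; width $\max_r|W_r\cup\bigcup_{e\sim r}X_e|-1$ ($e\sim r$: $r$ is an end of $e$); $\mathrm{dtw}(G)$ is the minimum width. *)

theory Defs
  imports Main
begin

datatype 'v dicotree =
    Leaf 'v
  | DUnion "'v dicotree" "'v dicotree"
  | DSeries "'v dicotree" "'v dicotree"
  | DOrder "'v dicotree" "'v dicotree"

fun leaves :: "'v dicotree \<Rightarrow> 'v list" where
  "leaves (Leaf v) = [v]"
| "leaves (DUnion a b) = leaves a @ leaves b"
| "leaves (DSeries a b) = leaves a @ leaves b"
| "leaves (DOrder a b) = leaves a @ leaves b"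

definition verts :: "'v dicotree \<Rightarrow> 'v set" where
  "verts t = set (leaves t)"

fun arcs :: "'v dicotree \<Rightarrow> ('v \<times> 'v) set" where
  "arcs (Leaf v) = {}"
| "arcs (DUnion a b) = arcs a \<union> arcs b"
| "arcs (DSeries a b) = arcs a \<union> arcs b \<union> (set (leaves a) \<times> set (leaves b))
                         \<union> (set (leaves b) \<times> set (leaves a))"
| "arcs (DOrder a b) = arcs a \<union> arcs b \<union> (set (leaves a) \<times> set (leaves b))"

definition wf_dicotree :: "'v dicotree \<Rightarrow> bool" where
  "wf_dicotree t = distinct (leaves t)"

definition is_dir_path_decomp :: "'v set \<Rightarrow> ('v \<times> 'v) set \<Rightarrow> 'v set list \<Rightarrow> bool" where
  "is_dir_path_decomp V E Xs \<longleftrightarrow>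
     (\<forall>X\<in>set Xs. X \<subseteq> V) \<and> \<Union>(set Xs) = V \<and>
     (\<forall>(u,v)\<in>E. \<exists>i j. i \<le> j \<and> j < length Xs \<and> u \<in> Xs ! i \<and> v \<in> Xs ! j) \<and>
     (\<forall>v i j k. i \<le> j \<and> j \<le> k \<and> k < length Xs \<and> v \<in> Xs ! i \<and> v \<in> Xs ! k \<longrightarrow> v \<in> Xs ! j)"

definition path_decomp_width :: "'v set list \<Rightarrow> nat" where
  "path_decomp_width Xs = Max (card ` set Xs) - 1"

definition dpw :: "'v set \<Rightarrow> ('v \<times> 'v) set \<Rightarrow> nat" where
  "dpw V E = Inf {path_decomp_width Xs | Xs. is_dir_path_decomp V E Xs}"

definition is_walk_in :: "('v \<times> 'v) set \<Rightarrow> 'v set \<Rightarrow> 'v list \<Rightarrow> bool" where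
  "is_walk_in E U w \<longleftrightarrow> w \<noteq> [] \<and> set w \<subseteq> U \<and>
     (\<forall>i. Suc i < length w \<longrightarrow> (w ! i, w ! Suc i) \<in> E)"

definition is_normal :: "'v set \<Rightarrow> ('v \<times> 'v) set \<Rightarrow> 'v set \<Rightarrow> 'v set \<Rightarrow> bool" where
  "is_normal V E Z S \<longleftrightarrow>
     \<not> (\<exists>w. is_walk_in E (V - Z) w \<and> hd w \<in> S \<and> last w \<in> S \<and>
            (\<exists>x\<in>set w. x \<notin> Z \<union> S))"

definition is_out_tree :: "nat set \<Rightarrow> (nat \<times> nat) set \<Rightarrow> nat \<Rightarrow> bool" where
  "is_out_tree VT ET r \<longleftrightarrow> finite VT \<and> r \<in> VT \<and> ET \<subseteq> VT \<times> VT \<and>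
     (\<forall>v\<in>VT. (r, v) \<in> ET\<^sup>*) \<and> (\<forall>u. (u, r) \<notin> ET) \<and>
     (\<forall>v\<in>VT - {r}. \<exists>!u. (u, v) \<in> ET)"

definition is_dir_tree_decomp ::
  "'v set \<Rightarrow> ('v \<times> 'v) set \<Rightarrow> nat set \<Rightarrow> (nat \<times> nat) set \<Rightarrow> nat
     \<Rightarrow> (nat \<times> nat \<Rightarrow> 'v set) \<Rightarrow> (nat \<Rightarrow> 'v set) \<Rightarrow> bool" where
  "is_dir_tree_decomp V E VT ET r X W \<longleftrightarrow>
     is_out_tree VT ET r \<and>
     (\<forall>e\<in>ET. X e \<subseteq> V) \<and>
     (\<forall>s\<in>VT. W s \<subseteq> V \<and> W s \<noteq> {}) \<and>
     (\<forall>s\<in>VT. \<forall>s'\<in>VT. s \<noteq> s' \<longrightarrow> W s \<inter> W s' = {}) \<and>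
     (\<Union>s\<in>VT. W s) = V \<and>
     (\<forall>(u,v)\<in>ET. is_normal V E (X (u,v)) (\<Union>{W s | s. s \<in> VT \<and> (v, s) \<in> ET\<^sup>*}))"

definition tree_decomp_width ::
  "nat set \<Rightarrow> (nat \<times> nat) set \<Rightarrow> (nat \<times> nat \<Rightarrow> 'v set) \<Rightarrow> (nat \<Rightarrow> 'v set) \<Rightarrow> nat" where
  "tree_decomp_width VT ET X W =
     Max {card (W s \<union> \<Union>{X e | e. e \<in> ET \<and> (fst e = s \<or> snd e = s)}) | s. s \<in> VT} - 1"

definition dtw :: "'v set \<Rightarrow> ('v \<times> 'v) set \<Rightarrow> nat" where
  "dtw V E = Inf {tree_decomp_width VT ET X W | VT ET r X W. is_dir_tree_decomp V E VT ET r X W}"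

text \<open>With a fixed program,
  each node costs O(1) unit-cost operations, so the whole evaluation runs in
  time O(number of tree nodes) = O(|V|).\<close>
datatype aexp =
    AVar bool nat       (* False: left child, True: right child; component index *)
  | AConst nat
  | APlus aexp aexp
  | AMax aexp aexp
  | AMin aexp aexp

definition get :: "nat list \<Rightarrow> nat \<Rightarrow> nat" where
  "get xs i = (if i < length xs then xs ! i else 0)"

fun aeval :: "aexp \<Rightarrow> nat list \<Rightarrow> nat list \<Rightarrow> nat" where
  "aeval (AVar c i) l r = (if c then get r i else get l i)"
| "aeval (AConst n) l r = n"
| "aeval (APlus a b) l r = aeval a l r + aeval b l r"
| "aeval (AMax a b) l r = max (aeval a l r) (aeval b l r)"
| "aeval (AMin a b) l r = min (aeval a l r) (aeval b l r)"

datatype tree_prog = TreeProg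
  (leaf_init: "nat list") (union_code: "aexp list") (series_code: "aexp list")
  (order_code: "aexp list")

fun run :: "tree_prog \<Rightarrow> 'v dicotree \<Rightarrow> nat list" where
  "run P (Leaf v) = leaf_init P"
| "run P (DUnion a b) = map (\<lambda>e. aeval e (run P a) (run P b)) (union_code P)"
| "run P (DSeries a b) = map (\<lambda>e. aeval e (run P a) (run P b)) (series_code P)"
| "run P (DOrder a b) = map (\<lambda>e. aeval e (run P a) (run P b)) (order_code P)"

end

theory Submission
  imports Defs
begin

fun fw :: "'v dicotree \<Rightarrow> nat" where
  "fw (Leaf v) = 0"
| "fw (DUnion a b) = max (fw a) (fw b)"
| "fw (DOrder a b) = max (fw a) (fw b)"
| "fw (DSeries a b) = min (fw a + length (leaves b)) (fw b + length (leaves a))"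

lemma verts_simps[simp]:
  "verts (Leaf v) = {v}"
  "verts (DUnion a b) = verts a \<union> verts b"
  "verts (DSeries a b) = verts a \<union> verts b"
  "verts (DOrder a b) = verts a \<union> verts b"
  by (auto simp: verts_def)

lemma finite_verts[simp]: "finite (verts t)"
  by (simp add: verts_def)

lemma wf_simps[simp]:
  "wf_dicotree (Leaf v)"
  "wf_dicotree (DUnion a b) \<longleftrightarrow> wf_dicotree a \<and> wf_dicotree b \<and> verts a \<inter> verts b = {}"
  "wf_dicotree (DSeries a b) \<longleftrightarrow> wf_dicotree a \<and> wf_dicotree b \<and> verts a \<inter> verts b = {}"
  "wf_dicotree (DOrder a b) \<longleftrightarrow> wf_dicotree a \<and> wf_dicotree b \<and> verts a \<inter> verts b = {}"
  by (auto simp: wf_dicotree_def verts_def)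

lemma card_verts: "wf_dicotree t \<Longrightarrow> card (verts t) = length (leaves t)"
  by (simp add: wf_dicotree_def verts_def distinct_card)

lemma arcs_sub: "arcs t \<subseteq> verts t \<times> verts t"
  by (induction t) (auto simp: verts_def)

lemma verts_ne: "verts t \<noteq> {}"
  by (induction t) auto

lemma pdd_append:
  assumes A: "is_dir_path_decomp Va Ea xs" and B: "is_dir_path_decomp Vb Eb ys"
    and D: "Va \<inter> Vb = {}" and E: "E \<subseteq> Ea \<union> Eb \<union> Va \<times> Vb"
  shows "is_dir_path_decomp (Va \<union> Vb) E (xs @ ys)"
proof -
  from A have A1: "\<forall>X\<in>set xs. X \<subseteq> Va" and A2: "\<Union>(set xs) = Va"
    and A3: "\<forall>(u,v)\<in>Ea. \<exists>i j. i \<le> j \<and> j < length xs \<and> u \<in> xs ! i \<and> v \<in> xs ! j"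
    and A4: "\<forall>v i j k. i \<le> j \<and> j \<le> k \<and> k < length xs \<and> v \<in> xs ! i \<and> v \<in> xs ! k \<longrightarrow> v \<in> xs ! j"
    unfolding is_dir_path_decomp_def by blast+
  from B have B1: "\<forall>X\<in>set ys. X \<subseteq> Vb" and B2: "\<Union>(set ys) = Vb"
    and B3: "\<forall>(u,v)\<in>Eb. \<exists>i j. i \<le> j \<and> j < length ys \<and> u \<in> ys ! i \<and> v \<in> ys ! j"
    and B4: "\<forall>v i j k. i \<le> j \<and> j \<le> k \<and> k < length ys \<and> v \<in> ys ! i \<and> v \<in> ys ! k \<longrightarrow> v \<in> ys ! j"
    unfolding is_dir_path_decomp_def by blast+
  have C3: "\<exists>i j. i \<le> j \<and> j < length (xs @ ys) \<and> u \<in> (xs @ ys) ! i \<and> v \<in> (xs @ ys) ! j"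
    if uv: "(u,v) \<in> E" for u v
  proof -
    consider "(u,v) \<in> Ea" | "(u,v) \<in> Eb" | "u \<in> Va" "v \<in> Vb" using uv E by blast
    then show ?thesis
    proof cases
      case 1
      then obtain i j where "i \<le> j" "j < length xs" "u \<in> xs ! i" "v \<in> xs ! j" using A3 by blast
      then show ?thesis by (intro exI[of _ i] exI[of _ j]) (auto simp: nth_append)
    next
      case 2
      then obtain i j where "i \<le> j" "j < length ys" "u \<in> ys ! i" "v \<in> ys ! j" using B3 by blast
      then show ?thesis
        by (intro exI[of _ "length xs + i"] exI[of _ "length xs + j"]) (auto simp: nth_append)
    next
      case 3
      then obtain X where "X \<in> set xs" "u \<in> X" using A2 by blast
      then obtain i where i: "i < length xs" "u \<in> xs ! i" by (metis in_set_conv_nth)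
      from 3 obtain Y where "Y \<in> set ys" "v \<in> Y" using B2 by blast
      then obtain j where j: "j < length ys" "v \<in> ys ! j" by (metis in_set_conv_nth)
      show ?thesis using i j
        by (intro exI[of _ i] exI[of _ "length xs + j"]) (auto simp: nth_append)
    qed
  qed
  have C4: "v \<in> (xs @ ys) ! j"
    if h: "i \<le> j" "j \<le> k" "k < length (xs @ ys)" "v \<in> (xs @ ys) ! i" "v \<in> (xs @ ys) ! k" for v i j k
  proof (cases "k < length xs")
    case True
    then show ?thesis using h A4[rule_format, of i j k v] by (auto simp: nth_append)
  next
    case False
    show ?thesis
    proof (cases "length xs \<le> i")
      case True
      have "i - length xs \<le> j - length xs" "j - length xs \<le> k - length xs" "k - length xs < length ys"
        using h False True by auto
      then show ?thesis using h False True B4[rule_format, of "i - length xs" "j - length xs" "k - length xs" v]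
        by (auto simp: nth_append)
    next
      case F2: False
      then have "v \<in> Va" using h A1 by (auto simp: nth_append)
      moreover have "v \<in> Vb" using h False B1 by (auto simp: nth_append)
      ultimately show ?thesis using D by blast
    qed
  qed
  show ?thesis unfolding is_dir_path_decomp_def
    using A1 A2 B1 B2 C3 C4 by auto
qed

lemma pdd_map:
  assumes A: "is_dir_path_decomp Va Ea xs" and ne: "xs \<noteq> []"
    and E: "E \<subseteq> Ea \<union> Vb \<times> (Va \<union> Vb) \<union> (Va \<union> Vb) \<times> Vb"
  shows "is_dir_path_decomp (Va \<union> Vb) E (map (\<lambda>X. X \<union> Vb) xs)"
proof -
  from A have A1: "\<forall>X\<in>set xs. X \<subseteq> Va" and A2: "\<Union>(set xs) = Va"
    and A3: "\<forall>(u,v)\<in>Ea. \<exists>i j. i \<le> j \<and> j < length xs \<and> u \<in> xs ! i \<and> v \<in> xs ! j"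
    and A4: "\<forall>v i j k. i \<le> j \<and> j \<le> k \<and> k < length xs \<and> v \<in> xs ! i \<and> v \<in> xs ! k \<longrightarrow> v \<in> xs ! j"
    unfolding is_dir_path_decomp_def by blast+
  let ?ys = "map (\<lambda>X. X \<union> Vb) xs"
  have inb: "\<exists>i < length xs. u \<in> ?ys ! i" if "u \<in> Va \<union> Vb" for u
  proof (cases "u \<in> Va")
    case True
    then obtain X where "X \<in> set xs" "u \<in> X" using A2 by blast
    then obtain i where i: "i < length xs" "u \<in> xs ! i" by (metis in_set_conv_nth)
    then show ?thesis by auto
  next
    case False
    then show ?thesis using that ne by (intro exI[of _ 0]) auto
  qed
  have C3: "\<exists>i j. i \<le> j \<and> j < length ?ys \<and> u \<in> ?ys ! i \<and> v \<in> ?ys ! j"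
    if uv: "(u,v) \<in> E" for u v
  proof -
    consider "(u,v) \<in> Ea" | "u \<in> Vb" "v \<in> Va \<union> Vb" | "u \<in> Va \<union> Vb" "v \<in> Vb" using uv E by blast
    then show ?thesis
    proof cases
      case 1
      then obtain i j where "i \<le> j" "j < length xs" "u \<in> xs ! i" "v \<in> xs ! j" using A3 by blast
      then show ?thesis by (intro exI[of _ i] exI[of _ j]) auto
    next
      case 2
      then obtain j where "j < length xs" "v \<in> ?ys ! j" using inb by blast
      then show ?thesis using 2 by (intro exI[of _ j] exI[of _ j]) auto
    next
      case 3
      then obtain j where "j < length xs" "u \<in> ?ys ! j" using inb by blast
      then show ?thesis using 3 by (intro exI[of _ j] exI[of _ j]) auto
    qed
  qed
  have C4: "v \<in> ?ys ! j"
    if h: "i \<le> j" "j \<le> k" "k < length ?ys" "v \<in> ?ys ! i" "v \<in> ?ys ! k" for v i j k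
    using h A4[rule_format, of i j k v] by auto
  have C2: "\<Union>(set ?ys) = Va \<union> Vb" using A2 ne by (cases xs) auto
  show ?thesis unfolding is_dir_path_decomp_def
    using A1 C2 C3 C4 by blast
qed

fun pd :: "'v dicotree \<Rightarrow> 'v set list" where
  "pd (Leaf v) = [{v}]"
| "pd (DUnion a b) = pd a @ pd b"
| "pd (DOrder a b) = pd a @ pd b"
| "pd (DSeries a b) = (if fw a + length (leaves b) \<le> fw b + length (leaves a)
     then map (\<lambda>X. X \<union> verts b) (pd a) else map (\<lambda>X. X \<union> verts a) (pd b))"

lemma pd_ok:
  "wf_dicotree t \<Longrightarrow> is_dir_path_decomp (verts t) (arcs t) (pd t) \<and> pd t \<noteq> []
     \<and> (\<forall>X\<in>set (pd t). card X \<le> fw t + 1)"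
proof (induction t)
  case (Leaf v)
  then show ?case by (auto simp: is_dir_path_decomp_def)
next
  case (DUnion a b)
  then have "is_dir_path_decomp (verts a \<union> verts b) (arcs (DUnion a b)) (pd a @ pd b)"
    by (intro pdd_append[where Ea="arcs a" and Eb="arcs b"]) auto
  then show ?case using DUnion by fastforce
next
  case (DOrder a b)
  then have "is_dir_path_decomp (verts a \<union> verts b) (arcs (DOrder a b)) (pd a @ pd b)"
    by (intro pdd_append[where Ea="arcs a" and Eb="arcs b"]) (auto simp: verts_def)
  then show ?case using DOrder by fastforce
next
  case (DSeries a b)
  then have wa: "wf_dicotree a" and wb: "wf_dicotree b" by auto
  show ?case
  proof (cases "fw a + length (leaves b) \<le> fw b + length (leaves a)")
    case True
    have "is_dir_path_decomp (verts a \<union> verts b) (arcs (DSeries a b)) (map (\<lambda>X. X \<union> verts b) (pd a))"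
      using DSeries.IH(1)[OF wa] arcs_sub[of a] arcs_sub[of b]
      by (intro pdd_map[where Ea="arcs a"]) (auto simp: verts_def)
    moreover have "card (X \<union> verts b) \<le> fw (DSeries a b) + 1" if "X \<in> set (pd a)" for X
    proof -
      have "card (X \<union> verts b) \<le> card X + card (verts b)" by (rule card_Un_le)
      also have "\<dots> \<le> fw a + 1 + length (leaves b)" using that DSeries.IH(1)[OF wa] card_verts[OF wb] by auto
      finally show ?thesis using True by simp
    qed
    ultimately show ?thesis using True DSeries.IH(1)[OF wa] by auto
  next
    case False
    have "is_dir_path_decomp (verts b \<union> verts a) (arcs (DSeries a b)) (map (\<lambda>X. X \<union> verts a) (pd b))"
      using DSeries.IH(2)[OF wb] arcs_sub[of a] arcs_sub[of b]
      by (intro pdd_map[where Ea="arcs b"]) (auto simp: verts_def)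
    moreover have "card (X \<union> verts a) \<le> fw (DSeries a b) + 1" if "X \<in> set (pd b)" for X
    proof -
      have "card (X \<union> verts a) \<le> card X + card (verts a)" by (rule card_Un_le)
      also have "\<dots> \<le> fw b + 1 + length (leaves a)" using that DSeries.IH(2)[OF wb] card_verts[OF wa] by auto
      finally show ?thesis using False by simp
    qed
    ultimately show ?thesis using False DSeries.IH(2)[OF wb] by (auto simp: Un_commute)
  qed
qed

lemma in_take_nth: "x \<in> set (take m xs) \<Longrightarrow> \<exists>i<m. i < length xs \<and> x = xs ! i"
  by (auto simp: in_set_conv_nth)

lemma in_drop_nth: "x \<in> set (drop m xs) \<Longrightarrow> \<exists>i\<ge>m. i < length xs \<and> x = xs ! i"
proof -
  assume "x \<in> set (drop m xs)"
  then obtain j where j: "j < length (drop m xs)" "x = drop m xs ! j" by (auto simp: in_set_conv_nth)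
  then show ?thesis by (intro exI[of _ "m + j"]) auto
qed

lemma nth_in_drop: "m \<le> i \<Longrightarrow> i < length xs \<Longrightarrow> xs ! i \<in> set (drop m xs)"
proof -
  assume "m \<le> i" "i < length xs"
  then have "drop m xs ! (i - m) = xs ! i" "i - m < length (drop m xs)" by auto
  then show ?thesis by (metis nth_mem)
qed

lemma crossing: "P (f 0) \<Longrightarrow> \<not> P (f q) \<Longrightarrow> \<exists>t<q. P (f t) \<and> \<not> P (f (Suc t))"
proof (induction q)
  case 0 then show ?case by simp
next
  case (Suc q)
  then show ?case by (cases "P (f q)") (auto intro: less_SucI)
qed

lemma inf_nat_le: "(x::nat) \<in> A \<Longrightarrow> Inf A \<le> x"
  by (simp add: cInf_lower)

lemma path_to_tree:
  assumes fin: "finite V" and ne: "V \<noteq> {}" and P: "is_dir_path_decomp V E Xs"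
  shows "\<exists>VT ET r X W. is_dir_tree_decomp V E VT ET r X W
           \<and> tree_decomp_width VT ET X W \<le> path_decomp_width Xs"
proof -
  from P have P1: "\<forall>X\<in>set Xs. X \<subseteq> V" and P2: "\<Union>(set Xs) = V"
    and P3: "\<forall>(u,v)\<in>E. \<exists>i j. i \<le> j \<and> j < length Xs \<and> u \<in> Xs ! i \<and> v \<in> Xs ! j"
    and P4: "\<And>v i j k. i \<le> j \<Longrightarrow> j \<le> k \<Longrightarrow> k < length Xs \<Longrightarrow> v \<in> Xs ! i \<Longrightarrow> v \<in> Xs ! k \<Longrightarrow> v \<in> Xs ! j"
    unfolding is_dir_path_decomp_def by blast+
  define fa where "fa v = (LEAST i. i < length Xs \<and> v \<in> Xs ! i)" for v
  have fa: "fa v < length Xs \<and> v \<in> Xs ! fa v" if "v \<in> V" for v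
  proof -
    from that P2 obtain X where "X \<in> set Xs" "v \<in> X" by blast
    then obtain i where "i < length Xs \<and> v \<in> Xs ! i" by (metis in_set_conv_nth)
    then show ?thesis unfolding fa_def by (rule LeastI)
  qed
  have fa_le: "fa v \<le> i" if "i < length Xs" "v \<in> Xs ! i" for v i
    unfolding fa_def using that by (simp add: Least_le)
  obtain L where L: "set L = V" "distinct L" using finite_distinct_list[OF fin] by blast
  define vs where "vs = sort_key fa L"
  have vs_set: "set vs = V" and vs_dist: "distinct vs" and vs_sorted: "sorted (map fa vs)"
    using L by (auto simp: vs_def)
  define n where "n = length vs"
  have mono: "fa (vs ! i) \<le> fa (vs ! j)" if "i \<le> j" "j < n" for i j
    using sorted_nth_mono[OF vs_sorted, of i j] that by (simp add: n_def)
  have vs_in: "vs ! i \<in> V" if "i < n" for i using that vs_set n_def nth_mem by blast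
  have n_pos: "0 < n" using ne vs_set n_def by (cases vs) auto
  define VT where "VT = {..<n}"
  define ET where "ET = {(k, Suc k) | k. Suc k < n}"
  define W where "W k = {vs ! k}" for k
  define X where "X (e::nat\<times>nat) = Xs ! fa (vs ! snd e) \<inter> set (take (snd e) vs)" for e
  have rt1: "a = b \<or> (a \<le> b \<and> b < n)" if "(a,b) \<in> ET\<^sup>*" for a b
    using that by (induction rule: rtrancl_induct) (auto simp: ET_def)
  have rt2: "(a,b) \<in> ET\<^sup>*" if "a \<le> b" "b < n" for a b
    using that
  proof (induction b rule: dec_induct)
    case base then show ?case by simp
  next
    case (step m)
    then have "(a, m) \<in> ET\<^sup>*" by simp
    moreover have "(m, Suc m) \<in> ET" using step by (auto simp: ET_def)
    ultimately show ?case by simp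
  qed
  have rt: "(a,b) \<in> ET\<^sup>* \<longleftrightarrow> a \<le> b \<and> b < n" if "a < n" for a b
    using rt1 rt2 that by blast
  have tree: "is_out_tree VT ET 0"
    unfolding is_out_tree_def
  proof (intro conjI)
    show "finite VT" by (simp add: VT_def)
    show "0 \<in> VT" using n_pos by (simp add: VT_def)
    show "ET \<subseteq> VT \<times> VT" by (auto simp: ET_def VT_def)
    show "\<forall>v\<in>VT. (0, v) \<in> ET\<^sup>*" using rt n_pos by (auto simp: VT_def)
    show "\<forall>u. (u, 0) \<notin> ET" by (auto simp: ET_def)
    show "\<forall>v\<in>VT - {0}. \<exists>!u. (u, v) \<in> ET"
    proof
      fix v assume "v \<in> VT - {0}"
      then obtain k where "v = Suc k" "Suc k < n" by (cases v) (auto simp: VT_def)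
      then show "\<exists>!u. (u, v) \<in> ET" by (auto simp: ET_def)
    qed
  qed
  have sub: "\<Union>{W s | s. s \<in> VT \<and> (v, s) \<in> ET\<^sup>*} = set (drop v vs)" if "v < n" for v
  proof -
    have "\<Union>{W s | s. s \<in> VT \<and> (v, s) \<in> ET\<^sup>*} = {vs ! s | s. v \<le> s \<and> s < n}"
      using rt[OF that] by (auto simp: W_def VT_def)
    also have "\<dots> = set (drop v vs)"
      using in_drop_nth[of _ v vs] nth_in_drop[of v _ vs] by (auto simp: n_def)
    finally show ?thesis .
  qed
  have take_drop: "x \<in> set (take m vs) \<or> x \<in> set (drop m vs)" if "x \<in> V" for x m
    using that vs_set by (metis Un_iff append_take_drop_id set_append)
  have take_not_drop: "x \<notin> set (drop m vs)" if "x \<in> set (take m vs)" for x m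
    using that vs_dist set_take_disj_set_drop_if_distinct by fastforce
  have normal: "is_normal V E (X (k, m)) (set (drop m vs))" if "m < n" for k m
  proof -
    define p where "p = fa (vs ! m)"
    have Xe: "X (k, m) = Xs ! p \<inter> set (take m vs)" by (simp add: X_def p_def)
    have fa_take: "fa x \<le> p" if "x \<in> set (take m vs)" for x
      using in_take_nth[OF that] mono \<open>m < n\<close> by (auto simp: p_def n_def)
    have fa_drop: "p \<le> fa x" if "x \<in> set (drop m vs)" for x
      using in_drop_nth[OF that] mono by (auto simp: p_def n_def)
    define late where "late x = (\<exists>j. p \<le> j \<and> j < length Xs \<and> x \<in> Xs ! j)" for x
    show ?thesis unfolding is_normal_def
    proof
      assume "\<exists>w. is_walk_in E (V - X (k, m)) w \<and> hd w \<in> set (drop m vs) \<and>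
            last w \<in> set (drop m vs) \<and> (\<exists>x\<in>set w. x \<notin> X (k, m) \<union> set (drop m vs))"
      then obtain w y where w: "is_walk_in E (V - X (k, m)) w" and hw: "hd w \<in> set (drop m vs)"
        and y: "y \<in> set w" "y \<notin> X (k, m) \<union> set (drop m vs)" by blast
      from w have wne: "w \<noteq> []" and wV: "set w \<subseteq> V - X (k,m)"
        and wE: "\<And>i. Suc i < length w \<Longrightarrow> (w ! i, w ! Suc i) \<in> E"
        unfolding is_walk_in_def by auto
      have "hd w \<in> V" using wV wne hd_in_set by blast
      then have late0: "late (w ! 0)" using fa[of "hd w"] fa_drop[OF hw] wne
        by (auto simp: late_def hd_conv_nth)
      obtain q where q: "q < length w" "y = w ! q" using y(1) by (metis in_set_conv_nth)
      have yV: "y \<in> V" using y(1) wV by auto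
      have ytake: "y \<in> set (take m vs)" using take_drop[OF yV] y(2) by blast
      have "\<not> late y"
      proof
        assume "late y"
        then obtain j where j: "p \<le> j" "j < length Xs" "y \<in> Xs ! j" by (auto simp: late_def)
        have "y \<in> Xs ! p" using P4[of "fa y" p j y] fa[OF yV] fa_take[OF ytake] j by auto
        then show False using y(2) ytake Xe by auto
      qed
      then obtain t where t: "t < q" "late (w ! t)" "\<not> late (w ! Suc t)"
        using crossing[of late "\<lambda>i. w ! i" q] late0 q by auto
      have "(w ! t, w ! Suc t) \<in> E" using wE t q by auto
      then obtain i j where ij: "i \<le> j" "j < length Xs" "w ! t \<in> Xs ! i" "w ! Suc t \<in> Xs ! j"
        using P3 by blast
      have jp: "j < p" using ij t(3) by (auto simp: late_def)
      obtain j' where j': "p \<le> j'" "j' < length Xs" "w ! t \<in> Xs ! j'" using t(2) by (auto simp: late_def)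
      have ap: "w ! t \<in> Xs ! p" using P4[of i p j' "w ! t"] ij jp j' by auto
      have "w ! t \<in> set w" using t q by simp
      then have aV: "w ! t \<in> V - X (k,m)" using wV by blast
      have "fa (w ! t) < p" using fa_le[of i "w ! t"] ij jp by auto
      then have "w ! t \<notin> set (drop m vs)" using fa_drop by force
      then have "w ! t \<in> set (take m vs)" using take_drop aV by blast
      then show False using ap aV Xe by auto
    qed
  qed
  have bag: "W s \<union> \<Union>{X e | e. e \<in> ET \<and> (fst e = s \<or> snd e = s)} \<subseteq> Xs ! fa (vs ! s)"
    if "s < n" for s
  proof -
    have "X e \<subseteq> Xs ! fa (vs ! s)" if e: "e \<in> ET" "fst e = s \<or> snd e = s" for e
    proof -
      from e obtain a where ea: "e = (a, Suc a)" "Suc a < n" by (auto simp: ET_def)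
      show ?thesis
      proof (cases "Suc a = s")
        case True then show ?thesis by (auto simp: X_def ea)
      next
        case False
        then have as: "a = s" using e ea by auto
        show ?thesis
        proof
          fix u assume "u \<in> X e"
          then have u1: "u \<in> Xs ! fa (vs ! Suc s)" and u2: "u \<in> set (take (Suc s) vs)"
            by (auto simp: X_def ea as)
          from in_take_nth[OF u2] obtain i where i: "i < Suc s" "u = vs ! i" by (auto simp: n_def)
          have "fa u \<le> fa (vs ! s)" using mono[of i s] i \<open>s < n\<close> by auto
          moreover have "fa (vs ! s) \<le> fa (vs ! Suc s)" using mono[of s "Suc s"] ea as by auto
          moreover have "u \<in> V" using i \<open>s < n\<close> vs_in by auto
          ultimately show "u \<in> Xs ! fa (vs ! s)"
            using P4[of "fa u" "fa (vs ! s)" "fa (vs ! Suc s)" u] fa[of u] fa[of "vs ! Suc s"] u1 ea as vs_in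
            by auto
        qed
      qed
    qed
    moreover have "W s \<subseteq> Xs ! fa (vs ! s)" using fa[OF vs_in[OF that]] by (auto simp: W_def)
    ultimately show ?thesis by blast
  qed
  have dec: "is_dir_tree_decomp V E VT ET 0 X W"
    unfolding is_dir_tree_decomp_def
  proof (intro conjI)
    show "is_out_tree VT ET 0" by (rule tree)
    show "\<forall>e\<in>ET. X e \<subseteq> V"
    proof
      fix e assume "e \<in> ET"
      then obtain a where "e = (a, Suc a)" "Suc a < n" by (auto simp: ET_def)
      then show "X e \<subseteq> V" using P1 fa vs_in by (auto simp: X_def)
    qed
    show "\<forall>s\<in>VT. W s \<subseteq> V \<and> W s \<noteq> {}" using vs_in by (auto simp: W_def VT_def)
    show "\<forall>s\<in>VT. \<forall>s'\<in>VT. s \<noteq> s' \<longrightarrow> W s \<inter> W s' = {}"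
      using vs_dist by (auto simp: W_def VT_def n_def nth_eq_iff_index_eq)
    show "(\<Union>s\<in>VT. W s) = V" using vs_set by (auto simp: W_def VT_def n_def in_set_conv_nth)
    show "\<forall>(u,v)\<in>ET. is_normal V E (X (u,v)) (\<Union>{W s | s. s \<in> VT \<and> (v, s) \<in> ET\<^sup>*})"
      using sub normal by (auto simp: ET_def)
  qed
  have wid: "tree_decomp_width VT ET X W \<le> path_decomp_width Xs"
  proof -
    have fin1: "finite (card ` set Xs)" by simp
    have "card (W s \<union> \<Union>{X e | e. e \<in> ET \<and> (fst e = s \<or> snd e = s)}) \<le> Max (card ` set Xs)"
      if "s \<in> VT" for s
    proof -
      have sn: "s < n" using that by (simp add: VT_def)
      have "fa (vs ! s) < length Xs" using fa[OF vs_in[OF sn]] by simp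
      then have XsV: "Xs ! fa (vs ! s) \<in> set Xs" by simp
      then have "finite (Xs ! fa (vs ! s))" using P1 fin finite_subset by blast
      then have "card (W s \<union> \<Union>{X e | e. e \<in> ET \<and> (fst e = s \<or> snd e = s)}) \<le> card (Xs ! fa (vs ! s))"
        using bag[OF sn] card_mono by blast
      also have "\<dots> \<le> Max (card ` set Xs)" using XsV fin1 by simp
      finally show ?thesis .
    qed
    then have "Max {card (W s \<union> \<Union>{X e | e. e \<in> ET \<and> (fst e = s \<or> snd e = s)}) | s. s \<in> VT}
        \<le> Max (card ` set Xs)"
      using n_pos by (subst Max_le_iff) (auto simp: VT_def)
    then show ?thesis unfolding tree_decomp_width_def path_decomp_width_def by simp
  qed
  show ?thesis
    by (rule exI[of _ VT], rule exI[of _ ET], rule exI[of _ 0], rule exI[of _ X], rule exI[of _ W])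
      (rule conjI[OF dec wid])
qed

definition bramble :: "'v set \<Rightarrow> ('v \<times> 'v) set \<Rightarrow> 'v set set \<Rightarrow> nat \<Rightarrow> bool" where
  "bramble V E B k \<longleftrightarrow>
     (\<forall>b\<in>B. b \<noteq> {} \<and> b \<subseteq> V \<and> (\<forall>x\<in>b. \<forall>y\<in>b. x \<noteq> y \<longrightarrow> (x,y) \<in> E \<and> (y,x) \<in> E)) \<and>
     (\<forall>b\<in>B. \<forall>b'\<in>B. b \<inter> b' \<noteq> {} \<or> (\<exists>x\<in>b. \<exists>y\<in>b'. (x,y) \<in> E \<and> (y,x) \<in> E)) \<and>
     (\<forall>Y. Y \<subseteq> V \<longrightarrow> card Y < k \<longrightarrow> (\<exists>b\<in>B. b \<inter> Y = {}))"

lemma normal_bidir: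
  assumes "is_normal V E Z S" "x \<in> S" "y \<notin> S" "x \<in> V - Z" "y \<in> V - Z" "(x,y) \<in> E" "(y,x) \<in> E"
  shows False
proof -
  have "is_walk_in E (V - Z) [x, y, x]"
    unfolding is_walk_in_def using assms(4-7)
    by (auto simp: less_Suc_eq nth_Cons split: nat.splits)
  then have "\<exists>w. is_walk_in E (V - Z) w \<and> hd w \<in> S \<and> last w \<in> S \<and> (\<exists>x\<in>set w. x \<notin> Z \<union> S)"
    using assms(2-5) by (intro exI[of _ "[x, y, x]"]) auto
  then show False using assms(1) unfolding is_normal_def by blast
qed

lemma out_tree_acyclic:
  assumes T: "is_out_tree VT ET r"
  shows "(s, s) \<notin> ET\<^sup>+"
proof
  assume ss: "(s, s) \<in> ET\<^sup>+"
  from T have sub: "ET \<subseteq> VT \<times> VT" and reach: "\<forall>v\<in>VT. (r, v) \<in> ET\<^sup>*"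
    and noin: "\<forall>u. (u, r) \<notin> ET" and uniq: "\<forall>v\<in>VT - {r}. \<exists>!u. (u, v) \<in> ET"
    unfolding is_out_tree_def by auto
  have pred: "\<exists>y. (y, v) \<in> ET \<and> (v, y) \<in> ET\<^sup>*" if "(v, v) \<in> ET\<^sup>+" for v
    using tranclD2[OF that] by blast
  have "(v, v) \<notin> ET\<^sup>+" if "(r, v) \<in> ET\<^sup>*" for v
    using that
  proof (induction rule: rtrancl_induct)
    case base
    show ?case using pred[of r] noin by blast
  next
    case (step u v)
    show ?case
    proof
      assume "(v, v) \<in> ET\<^sup>+"
      then obtain y where y: "(y, v) \<in> ET" "(v, y) \<in> ET\<^sup>*" using pred by blast
      have "v \<in> VT - {r}" using step(2) sub noin by blast
      then have "y = u" using uniq y(1) step(2) by blast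
      then have "(u, u) \<in> ET\<^sup>+" using step(2) y(2) by (simp add: rtrancl_into_trancl2)
      then show False using step(3) by blast
    qed
  qed
  moreover have "s \<in> VT" using ss sub by (metis mem_Sigma_iff subsetD tranclE)
  ultimately show False using reach ss by blast
qed

lemma bramble_bound:
  assumes D: "is_dir_tree_decomp V E VT ET r X W" and Br: "bramble V E B k"
  shows "\<exists>s\<in>VT. k \<le> card (W s \<union> \<Union>{X e | e. e \<in> ET \<and> (fst e = s \<or> snd e = s)})"
proof (rule ccontr)
  assume "\<not> ?thesis"
  then have small: "card (W s \<union> \<Union>{X e | e. e \<in> ET \<and> (fst e = s \<or> snd e = s)}) < k" if "s \<in> VT" for s
    using that by force
  define bag where "bag s = W s \<union> \<Union>{X e | e. e \<in> ET \<and> (fst e = s \<or> snd e = s)}" for s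
  define Sub where "Sub v = \<Union>{W s | s. s \<in> VT \<and> (v, s) \<in> ET\<^sup>*}" for v
  from D have T: "is_out_tree VT ET r" and Xsub: "\<forall>e\<in>ET. X e \<subseteq> V"
    and Wsub: "\<forall>s\<in>VT. W s \<subseteq> V \<and> W s \<noteq> {}"
    and Wun: "(\<Union>s\<in>VT. W s) = V"
    and Nor: "\<forall>(u,v)\<in>ET. is_normal V E (X (u,v)) (Sub v)"
    unfolding is_dir_tree_decomp_def Sub_def by blast+
  from T have fVT: "finite VT" and rVT: "r \<in> VT" and sub: "ET \<subseteq> VT \<times> VT"
    and reach: "\<forall>v\<in>VT. (r, v) \<in> ET\<^sup>*"
    unfolding is_out_tree_def by simp_all
  from Br have B1: "\<forall>b\<in>B. b \<noteq> {} \<and> b \<subseteq> V \<and> (\<forall>x\<in>b. \<forall>y\<in>b. x \<noteq> y \<longrightarrow> (x,y) \<in> E \<and> (y,x) \<in> E)"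
    and B2: "\<forall>b\<in>B. \<forall>b'\<in>B. b \<inter> b' \<noteq> {} \<or> (\<exists>x\<in>b. \<exists>y\<in>b'. (x,y) \<in> E \<and> (y,x) \<in> E)"
    and B3: "\<forall>Y. Y \<subseteq> V \<longrightarrow> card Y < k \<longrightarrow> (\<exists>b\<in>B. b \<inter> Y = {})"
    unfolding bramble_def by simp_all
  have bagV: "bag s \<subseteq> V" if "s \<in> VT" for s
    using that Wsub Xsub by (auto simp: bag_def)
  have miss: "\<exists>b\<in>B. b \<inter> bag s = {}" if "s \<in> VT" for s
    using B3 bagV[OF that] small[OF that] by (simp add: bag_def)
  have K1: "b \<subseteq> Sub v \<or> b \<inter> Sub v = {}"
    if e: "(u, v) \<in> ET" and b: "b \<in> B" "b \<inter> X (u, v) = {}" for u v b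
  proof (rule ccontr)
    assume "\<not> ?thesis"
    then obtain x y where xy: "x \<in> b" "x \<in> Sub v" "y \<in> b" "y \<notin> Sub v" by blast
    then have "x \<noteq> y" by blast
    then have "(x,y) \<in> E" "(y,x) \<in> E" using B1 b xy by blast+
    moreover have "x \<in> V - X (u,v)" "y \<in> V - X (u,v)" using B1 b xy by blast+
    ultimately show False using normal_bidir[of V E "X (u,v)" "Sub v" x y] Nor e xy by blast
  qed
  have K2: False
    if e: "(u, v) \<in> ET" and b: "b \<in> B" "b \<inter> X (u, v) = {}" "b \<subseteq> Sub v"
      and b': "b' \<in> B" "b' \<inter> X (u, v) = {}" "b' \<inter> Sub v = {}" for u v b b'
  proof -
    have N: "is_normal V E (X (u,v)) (Sub v)" using Nor e by blast
    have bb: "b \<inter> b' = {}" using b(3) b'(3) by blast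
    have "b \<inter> b' \<noteq> {} \<or> (\<exists>x\<in>b. \<exists>y\<in>b'. (x,y) \<in> E \<and> (y,x) \<in> E)"
      using B2 b(1) b'(1) by blast
    then obtain x y where xy: "x \<in> b" "y \<in> b'" "(x,y) \<in> E" "(y,x) \<in> E" using bb by blast
    have bV: "b \<subseteq> V" "b' \<subseteq> V" using B1 b(1) b'(1) by blast+
    have "x \<in> V - X (u,v)" using xy(1) bV(1) b(2) by blast
    moreover have "y \<in> V - X (u,v)" using xy(2) bV(2) b'(2) by blast
    moreover have "x \<in> Sub v" using xy(1) b(3) by blast
    moreover have "y \<notin> Sub v" using xy(2) b'(3) by blast
    ultimately show False using normal_bidir[OF N _ _ _ _ xy(3) xy(4)] by blast
  qed
  have Sub_dec: "Sub s \<subseteq> W s \<union> \<Union>{Sub c | c. (s, c) \<in> ET}" for s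
  proof
    fix x assume "x \<in> Sub s"
    then obtain s' where s': "s' \<in> VT" "(s, s') \<in> ET\<^sup>*" "x \<in> W s'" by (auto simp: Sub_def)
    from s'(2) show "x \<in> W s \<union> \<Union>{Sub c | c. (s, c) \<in> ET}"
    proof (cases rule: converse_rtranclE)
      case base then show ?thesis using s' by simp
    next
      case (step c)
      then have "x \<in> Sub c" using s' by (auto simp: Sub_def)
      then show ?thesis using step by blast
    qed
  qed
  have Sub_r: "Sub r = V"
    using Wun reach Wsub by (auto simp: Sub_def)
  have Wbag: "W s \<subseteq> bag s" for s by (auto simp: bag_def)
  have Xbag1: "X (s, c) \<subseteq> bag s" if "(s, c) \<in> ET" for s c using that by (force simp: bag_def)
  have Xbag2: "X (s, c) \<subseteq> bag c" if "(s, c) \<in> ET" for s c using that by (force simp: bag_def)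
  define Inv where "Inv s = (s \<in> VT \<and> (\<exists>Z. Z \<subseteq> bag s \<and> (\<forall>b\<in>B. b \<inter> Z = {} \<longrightarrow> b \<subseteq> Sub s)))" for s
  have step: "\<exists>c. (s, c) \<in> ET \<and> Inv c" if "Inv s" for s
  proof -
    from that have s: "s \<in> VT" and "\<exists>Z. Z \<subseteq> bag s \<and> (\<forall>b\<in>B. b \<inter> Z = {} \<longrightarrow> b \<subseteq> Sub s)"
      unfolding Inv_def by simp_all
    then obtain Z where Z: "Z \<subseteq> bag s" "\<forall>b\<in>B. b \<inter> Z = {} \<longrightarrow> b \<subseteq> Sub s"
      by blast
    obtain b0 where b0: "b0 \<in> B" "b0 \<inter> bag s = {}" using miss[OF s] by blast
    have "b0 \<inter> Z = {}" using b0(2) Z(1) by blast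
    then have b0s: "b0 \<subseteq> Sub s" using Z(2) b0(1) by blast
    have b0w: "b0 \<inter> W s = {}" using b0(2) Wbag[of s] by blast
    have "b0 \<noteq> {}" using B1 b0(1) by blast
    then obtain a where a: "a \<in> b0" by blast
    have "a \<in> Sub s" "a \<notin> W s" using a b0s b0w by blast+
    then have "a \<in> \<Union>{Sub c | c. (s, c) \<in> ET}" using Sub_dec[of s] by blast
    then obtain c where c: "(s, c) \<in> ET" "a \<in> Sub c" by blast
    have b0X: "b0 \<inter> X (s, c) = {}" using b0(2) Xbag1[OF c(1)] by blast
    have "b0 \<subseteq> Sub c \<or> b0 \<inter> Sub c = {}" by (rule K1[OF c(1) b0(1) b0X])
    then have b0c: "b0 \<subseteq> Sub c" using a c(2) by blast
    have cV: "c \<in> VT" using c(1) sub by blast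
    have allb: "b \<subseteq> Sub c" if "b \<in> B" "b \<inter> X (s, c) = {}" for b
    proof -
      have "b \<subseteq> Sub c \<or> b \<inter> Sub c = {}" by (rule K1[OF c(1) that])
      moreover have "\<not> (b \<inter> Sub c = {})"
      proof
        assume "b \<inter> Sub c = {}"
        then show False by (rule K2[OF c(1) b0(1) b0X b0c that])
      qed
      ultimately show ?thesis by blast
    qed
    have "Inv c"
      unfolding Inv_def using cV Xbag2[OF c(1)] allb by blast
    then show ?thesis using c(1) by blast
  qed
  have "\<not> Inv s" for s
  proof (induction s rule: measure_induct_rule[where f="\<lambda>s. card {s'. (s, s') \<in> ET\<^sup>*}"])
    case (less s)
    show ?case
    proof
      assume "Inv s"
      then obtain c where c: "(s, c) \<in> ET" "Inv c" using step by blast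
      have fin: "finite {s'. (s, s') \<in> ET\<^sup>*}"
      proof (rule finite_subset[of _ "insert s VT"])
        show "{s'. (s, s') \<in> ET\<^sup>*} \<subseteq> insert s VT"
        proof
          fix s' assume "s' \<in> {s'. (s, s') \<in> ET\<^sup>*}"
          then have "(s, s') \<in> ET\<^sup>*" by simp
          then show "s' \<in> insert s VT" using sub by (cases rule: rtranclE) auto
        qed
      qed (use fVT in simp)
      have "{s'. (c, s') \<in> ET\<^sup>*} \<subset> {s'. (s, s') \<in> ET\<^sup>*}"
      proof
        show "{s'. (c, s') \<in> ET\<^sup>*} \<subseteq> {s'. (s, s') \<in> ET\<^sup>*}"
          using c(1) by (auto intro: converse_rtrancl_into_rtrancl)
        have "(c, s) \<notin> ET\<^sup>*"
        proof
          assume "(c, s) \<in> ET\<^sup>*"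
          then have "(s, s) \<in> ET\<^sup>+" using c(1) by (simp add: rtrancl_into_trancl2)
          then show False using out_tree_acyclic[OF T] by blast
        qed
        then show "{s'. (c, s') \<in> ET\<^sup>*} \<noteq> {s'. (s, s') \<in> ET\<^sup>*}" by blast
      qed
      then have "card {s'. (c, s') \<in> ET\<^sup>*} < card {s'. (s, s') \<in> ET\<^sup>*}"
        using fin psubset_card_mono by blast
      then show False using less c(2) by blast
    qed
  qed
  moreover have "Inv r"
    unfolding Inv_def using rVT Sub_r B1 by (intro conjI exI[of _ "{}"]) auto
  ultimately show False by blast
qed

lemma bramble_width:
  assumes D: "is_dir_tree_decomp V E VT ET r X W" and Br: "bramble V E B (f + 1)"
  shows "f \<le> tree_decomp_width VT ET X W"
proof -
  obtain s where s: "s \<in> VT" "f + 1 \<le> card (W s \<union> \<Union>{X e | e. e \<in> ET \<and> (fst e = s \<or> snd e = s)})"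
    using bramble_bound[OF D Br] by blast
  have "finite VT" using D unfolding is_dir_tree_decomp_def is_out_tree_def by blast
  then have fin: "finite {card (W s \<union> \<Union>{X e | e. e \<in> ET \<and> (fst e = s \<or> snd e = s)}) | s. s \<in> VT}"
    by simp
  have "f + 1 \<le> Max {card (W s \<union> \<Union>{X e | e. e \<in> ET \<and> (fst e = s \<or> snd e = s)}) | s. s \<in> VT}"
    using s fin by (intro le_trans[OF s(2)] Max_ge) auto
  then show ?thesis unfolding tree_decomp_width_def by simp
qed

lemma bramble_mono:
  assumes Br: "bramble V E B k" and VV: "V \<subseteq> V'" and EE: "E \<subseteq> E'" and fin: "finite V'" and kk: "k' \<le> k"
  shows "bramble V' E' B k'"
proof -
  from Br have B1: "\<forall>b\<in>B. b \<noteq> {} \<and> b \<subseteq> V \<and> (\<forall>x\<in>b. \<forall>y\<in>b. x \<noteq> y \<longrightarrow> (x,y) \<in> E \<and> (y,x) \<in> E)"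
    and B2: "\<forall>b\<in>B. \<forall>b'\<in>B. b \<inter> b' \<noteq> {} \<or> (\<exists>x\<in>b. \<exists>y\<in>b'. (x,y) \<in> E \<and> (y,x) \<in> E)"
    and B3: "\<forall>Y. Y \<subseteq> V \<longrightarrow> card Y < k \<longrightarrow> (\<exists>b\<in>B. b \<inter> Y = {})"
    unfolding bramble_def by simp_all
  have C1: "\<forall>b\<in>B. b \<noteq> {} \<and> b \<subseteq> V' \<and> (\<forall>x\<in>b. \<forall>y\<in>b. x \<noteq> y \<longrightarrow> (x,y) \<in> E' \<and> (y,x) \<in> E')"
  proof
    fix b assume b: "b \<in> B"
    then have h: "b \<noteq> {}" "b \<subseteq> V" "\<forall>x\<in>b. \<forall>y\<in>b. x \<noteq> y \<longrightarrow> (x,y) \<in> E \<and> (y,x) \<in> E"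
      using B1 by simp_all
    show "b \<noteq> {} \<and> b \<subseteq> V' \<and> (\<forall>x\<in>b. \<forall>y\<in>b. x \<noteq> y \<longrightarrow> (x,y) \<in> E' \<and> (y,x) \<in> E')"
      using h VV EE by blast
  qed
  have C2: "\<forall>b\<in>B. \<forall>b'\<in>B. b \<inter> b' \<noteq> {} \<or> (\<exists>x\<in>b. \<exists>y\<in>b'. (x,y) \<in> E' \<and> (y,x) \<in> E')"
  proof (intro ballI)
    fix b b' assume "b \<in> B" "b' \<in> B"
    then have "b \<inter> b' \<noteq> {} \<or> (\<exists>x\<in>b. \<exists>y\<in>b'. (x,y) \<in> E \<and> (y,x) \<in> E)" using B2 by simp
    then show "b \<inter> b' \<noteq> {} \<or> (\<exists>x\<in>b. \<exists>y\<in>b'. (x,y) \<in> E' \<and> (y,x) \<in> E')" using EE by blast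
  qed
  have C3: "\<exists>b\<in>B. b \<inter> Y = {}" if Y: "Y \<subseteq> V'" "card Y < k'" for Y
  proof -
    have "finite Y" using Y(1) fin finite_subset by blast
    then have "card (Y \<inter> V) \<le> card Y" by (rule card_mono) blast
    then have "card (Y \<inter> V) < k" using Y(2) kk by linarith
    moreover have "Y \<inter> V \<subseteq> V" by blast
    ultimately obtain b where b: "b \<in> B" "b \<inter> (Y \<inter> V) = {}" using B3 by blast
    moreover have "b \<subseteq> V" using B1 b(1) by blast
    ultimately show ?thesis by blast
  qed
  have C3': "\<forall>Y. Y \<subseteq> V' \<longrightarrow> card Y < k' \<longrightarrow> (\<exists>b\<in>B. b \<inter> Y = {})"
    using C3 by blast
  show ?thesis unfolding bramble_def by (intro conjI C1 C2 C3')
qed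

lemma bramble_leaf: "bramble {v} {} {{v}} 1"
proof -
  have "{v} \<inter> Y = {}" if "Y \<subseteq> {v}" "card Y < 1" for Y :: "'a set"
  proof (rule ccontr)
    assume "{v} \<inter> Y \<noteq> {}"
    then have "Y = {v}" using that(1) by blast
    then show False using that(2) by simp
  qed
  then show ?thesis unfolding bramble_def by auto
qed

lemma series_bramble:
  assumes BrA: "bramble Va Ea BA (fa + 1)" and BrB: "bramble Vb Eb BB (fb + 1)"
    and disj: "Va \<inter> Vb = {}" and finA: "finite Va" and finB: "finite Vb"
    and EaE: "Ea \<subseteq> E" and EbE: "Eb \<subseteq> E" and cr1: "Va \<times> Vb \<subseteq> E" and cr2: "Vb \<times> Va \<subseteq> E"
  shows "bramble (Va \<union> Vb) E (BA \<union> BB \<union> {{u,v} | u v. u \<in> Va \<and> v \<in> Vb})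
           (min (fa + card Vb) (fb + card Va) + 1)"
proof -
  from BrA have A1: "\<forall>b\<in>BA. b \<noteq> {} \<and> b \<subseteq> Va \<and> (\<forall>x\<in>b. \<forall>y\<in>b. x \<noteq> y \<longrightarrow> (x,y) \<in> Ea \<and> (y,x) \<in> Ea)"
    and A2: "\<forall>b\<in>BA. \<forall>b'\<in>BA. b \<inter> b' \<noteq> {} \<or> (\<exists>x\<in>b. \<exists>y\<in>b'. (x,y) \<in> Ea \<and> (y,x) \<in> Ea)"
    and A3: "\<forall>Y. Y \<subseteq> Va \<longrightarrow> card Y < fa + 1 \<longrightarrow> (\<exists>b\<in>BA. b \<inter> Y = {})"
    unfolding bramble_def by simp_all
  from BrB have B1: "\<forall>b\<in>BB. b \<noteq> {} \<and> b \<subseteq> Vb \<and> (\<forall>x\<in>b. \<forall>y\<in>b. x \<noteq> y \<longrightarrow> (x,y) \<in> Eb \<and> (y,x) \<in> Eb)"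
    and B2: "\<forall>b\<in>BB. \<forall>b'\<in>BB. b \<inter> b' \<noteq> {} \<or> (\<exists>x\<in>b. \<exists>y\<in>b'. (x,y) \<in> Eb \<and> (y,x) \<in> Eb)"
    and B3: "\<forall>Y. Y \<subseteq> Vb \<longrightarrow> card Y < fb + 1 \<longrightarrow> (\<exists>b\<in>BB. b \<inter> Y = {})"
    unfolding bramble_def by simp_all
  define P where "P = {{u,v} | u v. u \<in> Va \<and> v \<in> Vb}"
  define hasA where "hasA c = (\<exists>x\<in>c. x \<in> Va)" for c
  define hasB where "hasB c = (\<exists>x\<in>c. x \<in> Vb)" for c
  have A1': "c \<noteq> {}" "c \<subseteq> Va" "\<And>x y. x \<in> c \<Longrightarrow> y \<in> c \<Longrightarrow> x \<noteq> y \<Longrightarrow> (x,y) \<in> Ea \<and> (y,x) \<in> Ea"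
    if "c \<in> BA" for c using A1 that by simp_all
  have B1': "c \<noteq> {}" "c \<subseteq> Vb" "\<And>x y. x \<in> c \<Longrightarrow> y \<in> c \<Longrightarrow> x \<noteq> y \<Longrightarrow> (x,y) \<in> Eb \<and> (y,x) \<in> Eb"
    if "c \<in> BB" for c using B1 that by simp_all
  have hA1: "hasA c" if cA: "c \<in> BA" for c
  proof -
    obtain x where "x \<in> c" using A1'(1)[OF cA] by blast
    then show ?thesis using A1'(2)[OF cA] unfolding hasA_def by blast
  qed
  have hB1: "hasB c" if cB: "c \<in> BB" for c
  proof -
    obtain x where "x \<in> c" using B1'(1)[OF cB] by blast
    then show ?thesis using B1'(2)[OF cB] unfolding hasB_def by blast
  qed
  have Pform: "\<exists>u v. c = {u,v} \<and> u \<in> Va \<and> v \<in> Vb" if "c \<in> P" for c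
    using that unfolding P_def by simp
  have hP: "hasA c \<and> hasB c" if cP: "c \<in> P" for c
  proof -
    obtain u v where "c = {u,v}" "u \<in> Va" "v \<in> Vb" using Pform[OF cP] by blast
    then show ?thesis unfolding hasA_def hasB_def by blast
  qed
  have tAB: "\<exists>x\<in>c. \<exists>y\<in>c'. (x,y) \<in> E \<and> (y,x) \<in> E" if hh: "hasA c" "hasB c'" for c c'
  proof -
    obtain x y where "x \<in> c" "x \<in> Va" "y \<in> c'" "y \<in> Vb" using hh unfolding hasA_def hasB_def by blast
    moreover then have "(x,y) \<in> E" "(y,x) \<in> E" using cr1 cr2 by blast+
    ultimately show ?thesis by blast
  qed
  have tBA: "\<exists>x\<in>c. \<exists>y\<in>c'. (x,y) \<in> E \<and> (y,x) \<in> E" if hh: "hasB c" "hasA c'" for c c'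
  proof -
    obtain x y where "x \<in> c" "x \<in> Vb" "y \<in> c'" "y \<in> Va" using hh unfolding hasA_def hasB_def by blast
    moreover then have "(x,y) \<in> E" "(y,x) \<in> E" using cr1 cr2 by blast+
    ultimately show ?thesis by blast
  qed
  have C1a: "c \<noteq> {} \<and> c \<subseteq> Va \<union> Vb \<and> (\<forall>x\<in>c. \<forall>y\<in>c. x \<noteq> y \<longrightarrow> (x,y) \<in> E \<and> (y,x) \<in> E)"
    if cc: "c \<in> BA \<union> BB \<union> P" for c
  proof -
    consider "c \<in> BA" | "c \<in> BB" | "c \<in> P" using cc by blast
    then show ?thesis
    proof cases
      case 1
      have "\<forall>x\<in>c. \<forall>y\<in>c. x \<noteq> y \<longrightarrow> (x,y) \<in> E \<and> (y,x) \<in> E"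
        using A1'(3)[OF 1] EaE by blast
      then show ?thesis using A1'(1,2)[OF 1] by blast
    next
      case 2
      have "\<forall>x\<in>c. \<forall>y\<in>c. x \<noteq> y \<longrightarrow> (x,y) \<in> E \<and> (y,x) \<in> E"
        using B1'(3)[OF 2] EbE by blast
      then show ?thesis using B1'(1,2)[OF 2] by blast
    next
      case 3
      then obtain u v where uv: "c = {u,v}" "u \<in> Va" "v \<in> Vb" using Pform by blast
      then have "(u,v) \<in> E" "(v,u) \<in> E" using cr1 cr2 by blast+
      then have "\<forall>x\<in>c. \<forall>y\<in>c. x \<noteq> y \<longrightarrow> (x,y) \<in> E \<and> (y,x) \<in> E" using uv(1) by blast
      then show ?thesis using uv by blast
    qed
  qed
  have C2a: "c \<inter> c' \<noteq> {} \<or> (\<exists>x\<in>c. \<exists>y\<in>c'. (x,y) \<in> E \<and> (y,x) \<in> E)"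
    if c: "c \<in> BA \<union> BB \<union> P" and c': "c' \<in> BA \<union> BB \<union> P" for c c'
  proof (cases "c \<in> BA \<and> c' \<in> BA")
    case True
    then have "c \<inter> c' \<noteq> {} \<or> (\<exists>x\<in>c. \<exists>y\<in>c'. (x,y) \<in> Ea \<and> (y,x) \<in> Ea)" using A2 by simp
    then show ?thesis using EaE by blast
  next
    case F1: False
    show ?thesis
    proof (cases "c \<in> BB \<and> c' \<in> BB")
      case True
      then have "c \<inter> c' \<noteq> {} \<or> (\<exists>x\<in>c. \<exists>y\<in>c'. (x,y) \<in> Eb \<and> (y,x) \<in> Eb)" using B2 by simp
      then show ?thesis using EbE by blast
    next
      case F2: False
      consider "c \<in> BA" | "c \<in> BB" | "c \<in> P" using c by blast
      then show ?thesis
      proof cases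
        case 1
        then have "c' \<notin> BA" using F1 by blast
        then have "c' \<in> BB \<or> c' \<in> P" using c' by blast
        then have "hasB c'" using hB1 hP by blast
        then show ?thesis using tAB[OF hA1[OF 1]] by blast
      next
        case 2
        then have "c' \<notin> BB" using F2 by blast
        then have "c' \<in> BA \<or> c' \<in> P" using c' by blast
        then have "hasA c'" using hA1 hP by blast
        then show ?thesis using tBA[OF hB1[OF 2]] by blast
      next
        case 3
        then have h: "hasA c" "hasB c" using hP by blast+
        have "c' \<in> BA \<or> c' \<in> BB \<or> c' \<in> P" using c' by blast
        then have "hasA c' \<or> hasB c'" using hA1 hB1 hP by blast
        then show ?thesis using tAB[OF h(1)] tBA[OF h(2)] by blast
      qed
    qed
  qed
  have C3a: "\<exists>b\<in>BA \<union> BB \<union> P. b \<inter> Y = {}"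
    if Y: "Y \<subseteq> Va \<union> Vb" "card Y < min (fa + card Vb) (fb + card Va) + 1" for Y
  proof -
    have finY: "finite Y" using Y(1) finA finB finite_subset by blast
    show ?thesis
    proof (cases "(\<exists>u\<in>Va. u \<notin> Y) \<and> (\<exists>v\<in>Vb. v \<notin> Y)")
      case True
      then obtain u v where uv: "u \<in> Va" "u \<notin> Y" "v \<in> Vb" "v \<notin> Y" by blast
      then have "{u,v} \<in> P" unfolding P_def by blast
      moreover have "{u,v} \<inter> Y = {}" using uv by blast
      ultimately show ?thesis by blast
    next
      case False
      then consider "Vb \<subseteq> Y" | "Va \<subseteq> Y" by blast
      then show ?thesis
      proof cases
        case 1
        have "Y = (Y \<inter> Va) \<union> Vb" using 1 Y(1) by blast
        moreover have "(Y \<inter> Va) \<inter> Vb = {}" using disj by blast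
        moreover have "finite (Y \<inter> Va)" using finY by simp
        ultimately have "card Y = card (Y \<inter> Va) + card Vb"
          using finB card_Un_disjoint[of "Y \<inter> Va" Vb] by simp
        then have "card (Y \<inter> Va) < fa + 1" using Y(2) by linarith
        moreover have "Y \<inter> Va \<subseteq> Va" by blast
        ultimately obtain b where b: "b \<in> BA" "b \<inter> (Y \<inter> Va) = {}" using A3 by blast
        moreover have "b \<subseteq> Va" using A1'(2)[OF b(1)] .
        ultimately show ?thesis by blast
      next
        case 2
        have "Y = (Y \<inter> Vb) \<union> Va" using 2 Y(1) by blast
        moreover have "(Y \<inter> Vb) \<inter> Va = {}" using disj by blast
        moreover have "finite (Y \<inter> Vb)" using finY by simp
        ultimately have "card Y = card (Y \<inter> Vb) + card Va"
          using finA card_Un_disjoint[of "Y \<inter> Vb" Va] by simp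
        then have "card (Y \<inter> Vb) < fb + 1" using Y(2) by linarith
        moreover have "Y \<inter> Vb \<subseteq> Vb" by blast
        ultimately obtain b where b: "b \<in> BB" "b \<inter> (Y \<inter> Vb) = {}" using B3 by blast
        moreover have "b \<subseteq> Vb" using B1'(2)[OF b(1)] .
        ultimately show ?thesis by blast
      qed
    qed
  qed
  have X1: "\<forall>c\<in>BA \<union> BB \<union> P. c \<noteq> {} \<and> c \<subseteq> Va \<union> Vb \<and> (\<forall>x\<in>c. \<forall>y\<in>c. x \<noteq> y \<longrightarrow> (x,y) \<in> E \<and> (y,x) \<in> E)"
    using C1a by blast
  have X2: "\<forall>c\<in>BA \<union> BB \<union> P. \<forall>c'\<in>BA \<union> BB \<union> P. c \<inter> c' \<noteq> {} \<or> (\<exists>x\<in>c. \<exists>y\<in>c'. (x,y) \<in> E \<and> (y,x) \<in> E)"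
    using C2a by blast
  have X3: "\<forall>Y. Y \<subseteq> Va \<union> Vb \<longrightarrow> card Y < min (fa + card Vb) (fb + card Va) + 1 \<longrightarrow> (\<exists>b\<in>BA \<union> BB \<union> P. b \<inter> Y = {})"
    using C3a by blast
  have "bramble (Va \<union> Vb) E (BA \<union> BB \<union> P) (min (fa + card Vb) (fb + card Va) + 1)"
    unfolding bramble_def by (intro conjI X1 X2 X3)
  then show ?thesis by (simp only: P_def)
qed

lemma bramble_ex: "wf_dicotree t \<Longrightarrow> \<exists>B. bramble (verts t) (arcs t) B (fw t + 1)"
proof (induction t)
  case (Leaf v)
  then show ?case using bramble_leaf[of v] by auto
next
  case (DUnion a b)
  then obtain Ba Bb where Ba: "bramble (verts a) (arcs a) Ba (fw a + 1)"
    and Bb: "bramble (verts b) (arcs b) Bb (fw b + 1)" by auto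
  show ?case
  proof (cases "fw b \<le> fw a")
    case True
    have "bramble (verts (DUnion a b)) (arcs (DUnion a b)) Ba (fw (DUnion a b) + 1)"
      by (rule bramble_mono[OF Ba]) (use True in auto)
    then show ?thesis by blast
  next
    case False
    have "bramble (verts (DUnion a b)) (arcs (DUnion a b)) Bb (fw (DUnion a b) + 1)"
      by (rule bramble_mono[OF Bb]) (use False in auto)
    then show ?thesis by blast
  qed
next
  case (DOrder a b)
  then obtain Ba Bb where Ba: "bramble (verts a) (arcs a) Ba (fw a + 1)"
    and Bb: "bramble (verts b) (arcs b) Bb (fw b + 1)" by auto
  show ?case
  proof (cases "fw b \<le> fw a")
    case True
    have "bramble (verts (DOrder a b)) (arcs (DOrder a b)) Ba (fw (DOrder a b) + 1)"
      by (rule bramble_mono[OF Ba]) (use True in auto)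
    then show ?thesis by blast
  next
    case False
    have "bramble (verts (DOrder a b)) (arcs (DOrder a b)) Bb (fw (DOrder a b) + 1)"
      by (rule bramble_mono[OF Bb]) (use False in auto)
    then show ?thesis by blast
  qed
next
  case (DSeries a b)
  then have wa: "wf_dicotree a" and wb: "wf_dicotree b" and dj: "verts a \<inter> verts b = {}" by auto
  from DSeries obtain Ba Bb where Ba: "bramble (verts a) (arcs a) Ba (fw a + 1)"
    and Bb: "bramble (verts b) (arcs b) Bb (fw b + 1)" by auto
  have "bramble (verts a \<union> verts b) (arcs (DSeries a b))
     (Ba \<union> Bb \<union> {{u,v} | u v. u \<in> verts a \<and> v \<in> verts b})
     (min (fw a + card (verts b)) (fw b + card (verts a)) + 1)"
    by (rule series_bramble[OF Ba Bb dj]) (auto simp: verts_def)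
  moreover have "min (fw a + card (verts b)) (fw b + card (verts a)) + 1 = fw (DSeries a b) + 1"
    using card_verts[OF wa] card_verts[OF wb] by simp
  moreover have "verts a \<union> verts b = verts (DSeries a b)" by simp
  ultimately have "bramble (verts (DSeries a b)) (arcs (DSeries a b))
     (Ba \<union> Bb \<union> {{u,v} | u v. u \<in> verts a \<and> v \<in> verts b}) (fw (DSeries a b) + 1)"
    by metis
  then show ?case by (rule exI)
qed

definition Pm :: tree_prog where
  "Pm = TreeProg [0, 1]
     [AMax (AVar False 0) (AVar True 0), APlus (AVar False 1) (AVar True 1)]
     [AMin (APlus (AVar False 0) (AVar True 1)) (APlus (AVar True 0) (AVar False 1)),
      APlus (AVar False 1) (AVar True 1)]
     [AMax (AVar False 0) (AVar True 0), APlus (AVar False 1) (AVar True 1)]"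

lemma run_Pm: "run Pm t = [fw t, length (leaves t)]"
  by (induction t) (simp_all add: Pm_def get_def)

lemma dpw_le: "wf_dicotree t \<Longrightarrow> dpw (verts t) (arcs t) \<le> fw t"
proof -
  assume wf: "wf_dicotree t"
  from pd_ok[OF wf] have P: "is_dir_path_decomp (verts t) (arcs t) (pd t)" and ne: "pd t \<noteq> []"
    and cb: "\<forall>X\<in>set (pd t). card X \<le> fw t + 1" by auto
  have "Max (card ` set (pd t)) \<le> fw t + 1" using ne cb by (subst Max_le_iff) auto
  then have "path_decomp_width (pd t) \<le> fw t" unfolding path_decomp_width_def by simp
  moreover have "dpw (verts t) (arcs t) \<le> path_decomp_width (pd t)"
    unfolding dpw_def using P by (intro inf_nat_le) blast
  ultimately show ?thesis by simp
qed

lemma tree_from_path: "wf_dicotree t \<Longrightarrow> \<exists>VT ET r X W. is_dir_tree_decomp (verts t) (arcs t) VT ET r X W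
   \<and> tree_decomp_width VT ET X W \<le> dpw (verts t) (arcs t)"
proof -
  assume wf: "wf_dicotree t"
  have "path_decomp_width (pd t) \<in> {path_decomp_width Xs | Xs. is_dir_path_decomp (verts t) (arcs t) Xs}"
    using pd_ok[OF wf] by blast
  then have "dpw (verts t) (arcs t) \<in> {path_decomp_width Xs | Xs. is_dir_path_decomp (verts t) (arcs t) Xs}"
    unfolding dpw_def by (intro Inf_nat_def1) blast
  then obtain Xs where Xs: "is_dir_path_decomp (verts t) (arcs t) Xs" "dpw (verts t) (arcs t) = path_decomp_width Xs"
    by blast
  show ?thesis using path_to_tree[OF finite_verts verts_ne Xs(1)] Xs(2) by simp
qed

lemma dtw_le_dpw: "wf_dicotree t \<Longrightarrow> dtw (verts t) (arcs t) \<le> dpw (verts t) (arcs t)"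
proof -
  assume wf: "wf_dicotree t"
  obtain VT ET r X W where D: "is_dir_tree_decomp (verts t) (arcs t) VT ET r X W"
    and w: "tree_decomp_width VT ET X W \<le> dpw (verts t) (arcs t)"
    using tree_from_path[OF wf] by blast
  have "dtw (verts t) (arcs t) \<le> tree_decomp_width VT ET X W"
    unfolding dtw_def using D by (intro inf_nat_le) blast
  then show ?thesis using w by simp
qed

lemma fw_le_dtw: "wf_dicotree t \<Longrightarrow> fw t \<le> dtw (verts t) (arcs t)"
proof -
  assume wf: "wf_dicotree t"
  obtain B where Br: "bramble (verts t) (arcs t) B (fw t + 1)" using bramble_ex[OF wf] by blast
  obtain VT ET r X W where D: "is_dir_tree_decomp (verts t) (arcs t) VT ET r X W"
    using tree_from_path[OF wf] by blast
  show ?thesis unfolding dtw_def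
  proof (rule cInf_greatest)
    show "{tree_decomp_width VT ET X W | VT ET r X W. is_dir_tree_decomp (verts t) (arcs t) VT ET r X W} \<noteq> {}"
      using D by blast
  next
    fix x assume "x \<in> {tree_decomp_width VT ET X W | VT ET r X W. is_dir_tree_decomp (verts t) (arcs t) VT ET r X W}"
    then obtain VT ET r X W where "is_dir_tree_decomp (verts t) (arcs t) VT ET r X W"
      "x = tree_decomp_width VT ET X W" by blast
    then show "fw t \<le> x" using bramble_width[OF _ Br] by simp
  qed
qed

theorem theorem5p4:
  "\<exists>(P :: tree_prog) (i_dpw :: nat) (i_dtw :: nat).
     \<forall>t :: 'v dicotree. wf_dicotree t \<longrightarrow>
       get (run P t) i_dpw = dpw (verts t) (arcs t) \<and>
       get (run P t) i_dtw = dtw (verts t) (arcs t)"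
proof (intro exI allI impI)
  fix t :: "'v dicotree"
  assume wf: "wf_dicotree t"
  have g: "get (run Pm t) 0 = fw t" by (simp add: run_Pm get_def)
  have e1: "dpw (verts t) (arcs t) = fw t"
    using dpw_le[OF wf] dtw_le_dpw[OF wf] fw_le_dtw[OF wf] by simp
  have e2: "dtw (verts t) (arcs t) = fw t"
    using dpw_le[OF wf] dtw_le_dpw[OF wf] fw_le_dtw[OF wf] by simp
  show "get (run Pm t) 0 = dpw (verts t) (arcs t) \<and> get (run Pm t) 0 = dtw (verts t) (arcs t)"
    using g e1 e2 by simp
qed

end
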